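(* Let $n\ge2$, let $r_1,\dots,r_{4^{n-1}+1}$ be the vertices of an affine Koch curve at step $n$, and let $w_n=c_1c_2\cdots c_{2\cdot 4^{n-2}-1}$ be its Koch code. Then: (i) for every $k$ with $c_k=1$ the affine curvatures satisfy $\kappa_{2k}=\kappa_{2k+1}=-1$, $\bar\kappa_{2k}=-1$, $\bar\kappa_{2k+1}=1$; for every $k$ with $c_k=0$ they satisfy $\kappa_{2k}=\kappa_{2k+1}=\bar\kappa_{2k}=\bar\kappa_{2k+1}=1$; (ii) $w_2=1$ and $w_{n+1}=w_n\,0\,w_n\,1\,w_n\,0\,w_n$ (concatenation of words) for all $n\ge 2$; in particular $w_3=1011101$, $w_4=1011101\,0\,1011101\,1\,1011101\,0\,1011101$, and $w_n$ has $2\cdot4^{n-2}-1$ letters.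
   Context: Let $R_\theta$ denote counterclockwise rotation of $\mathbb R^2$ by the angle $\theta$. The standard Koch curve at step $n$ is the polygon $K_n$ with vertices $r_1,\dots,r_{4^{n-1}+1}$ defined recursively: $K_1$ has vertices $(0,0),(1,0)$; $K_{n+1}$ is obtained from $K_n$ by replacing each edge from $p$ to $q$, in order, by the four edges through the points $p,\ p+\tfrac13(q-p),\ p+\tfrac13(q-p)+\tfrac13R_{\pi/3}(q-p),\ p+\tfrac23(q-p),\ q$, and numbering the resulting vertices consecutively starting from $(0,0)$. An affine Koch curve at step $n$ is the image of $K_n$ under an invertible affine map of $\mathbb R^2$, with vertices numbered correspondingly. A vertex $r_i$ ($2\le i\le 4^{n-1}$) of $K_n$ is a sharp point if the angle $\angle r_{i-1}r_ir_{i+1}$ equals $\pi/3$. For $n\ge 2$ the Koch code at step $n$ is the word $w_n=c_1\cdots c_{2\cdot4^{n-2}-1}$ over $\{0,1\}$ with $c_k=1$ iff $r_{2k+1}$ is a sharp point of $K_n$ (the same code is used for affine images of $K_n$). Affine curvatures: for a polygon with vertices $r_1,\dots,r_N\in\mathbb R^2$ put $t_k=r_{k+1}-r_k$ and $[a,b]=a_1b_2-a_2b_1$ for $a,b\in\mathbb R^2$. For $2\le k\le N-2$ with $[t_{k-1},t_k]\ne0$ the first and second affine curvatures at $r_k$ are $\kappa_k=\dfrac{[t_k,t_{k+1}]}{[t_{k-1},t_k]}$ and $\bar\kappa_k=\dfrac{[t_{k-1},t_{k+1}]}{[t_{k-1},t_k]}$. *)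

theory Defs
  imports "HOL-Analysis.Analysis"
begin

definition rot :: "real \<Rightarrow> real^2 \<Rightarrow> real^2" where
  "rot \<theta> v = vector [cos \<theta> * v$1 - sin \<theta> * v$2, sin \<theta> * v$1 + cos \<theta> * v$2]"

text \<open>Replacing the edge from p to q by four edges; we list the first four of the
  five points (the endpoint q is contributed by the next edge / the last vertex).\<close>
definition koch_edge :: "real^2 \<Rightarrow> real^2 \<Rightarrow> (real^2) list" where
  "koch_edge p q =
     [p, p + (1/3) *\<^sub>R (q - p),
      p + (1/3) *\<^sub>R (q - p) + (1/3) *\<^sub>R rot (pi/3) (q - p),
      p + (2/3) *\<^sub>R (q - p)]"

fun koch_refine :: "(real^2) list \<Rightarrow> (real^2) list" where
  "koch_refine [] = []"
| "koch_refine [p] = [p]"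
| "koch_refine (p # q # rest) = koch_edge p q @ koch_refine (q # rest)"

text \<open>The list of vertices of the standard Koch curve K_n (n \<ge> 1);
  the list index j corresponds to the vertex r_(j+1).\<close>
definition koch :: "nat \<Rightarrow> (real^2) list" where
  "koch n = (koch_refine ^^ (n - 1)) [vector [0, 0], vector [1, 0]]"

definition kv :: "nat \<Rightarrow> nat \<Rightarrow> real^2" where
  "kv n i = koch n ! (i - 1)"

definition vec_angle :: "real^2 \<Rightarrow> real^2 \<Rightarrow> real" where
  "vec_angle u v = arccos ((u \<bullet> v) / (norm u * norm v))"

definition sharp :: "nat \<Rightarrow> nat \<Rightarrow> bool" where
  "sharp n i \<longleftrightarrow> 2 \<le> i \<and> i \<le> 4^(n-1) \<and>
     vec_angle (kv n (i - 1) - kv n i) (kv n (i + 1) - kv n i) = pi / 3"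

definition koch_code :: "nat \<Rightarrow> nat list" where
  "koch_code n = map (\<lambda>k. if sharp n (2 * k + 1) then 1 else 0) [1..<2 * 4^(n-2)]"

definition brk :: "real^2 \<Rightarrow> real^2 \<Rightarrow> real" where
  "brk a b = a$1 * b$2 - a$2 * b$1"

definition tng :: "(nat \<Rightarrow> real^2) \<Rightarrow> nat \<Rightarrow> real^2" where
  "tng r k = r (k + 1) - r k"

definition kappa :: "(nat \<Rightarrow> real^2) \<Rightarrow> nat \<Rightarrow> real" where
  "kappa r k = brk (tng r k) (tng r (k + 1)) / brk (tng r (k - 1)) (tng r k)"

definition kappa_bar :: "(nat \<Rightarrow> real^2) \<Rightarrow> nat \<Rightarrow> real" where
  "kappa_bar r k = brk (tng r (k - 1)) (tng r (k + 1)) / brk (tng r (k - 1)) (tng r k)"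

end

theory Submission
  imports Defs
begin

fun turn :: "nat \<Rightarrow> int" where
  "turn 0 = 0"
| "turn (Suc j) = (if odd (Suc j) then 1 else if Suc j mod 4 = 2 then -2 else turn (Suc j div 4))"

lemma turn_eq: "j > 0 \<Longrightarrow> turn j = (if odd j then 1 else if j mod 4 = 2 then -2 else turn (j div 4))"
  by (cases j) auto

declare turn.simps(2)[simp del]

lemma turn_4a1[simp]: "turn (Suc (4*a)) = 1" by (subst turn_eq) auto
lemma turn_4a2[simp]: "turn (Suc (Suc (4*a))) = -2"
proof -
  have "Suc (Suc (4*a)) mod 4 = 2" by presburger
  then show ?thesis by (subst turn_eq) auto
qed
lemma turn_4a3[simp]: "turn (Suc (Suc (Suc (4*a)))) = 1" by (subst turn_eq) auto
lemma turn_4a4[simp]: "turn (Suc (Suc (Suc (Suc (4*a))))) = turn (Suc a)"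
proof -
  have "Suc (Suc (Suc (Suc (4*a)))) mod 4 = 0" "Suc (Suc (Suc (Suc (4*a)))) div 4 = Suc a" by presburger+
  then show ?thesis by (subst turn_eq) auto
qed
lemma turn_odd: "odd j \<Longrightarrow> turn j = 1" using turn_eq[of j] by (cases j) auto
lemma turn_vals: "j > 0 \<Longrightarrow> turn j = 1 \<or> turn j = -2"
proof (induction j rule: less_induct)
  case (less j)
  show ?case
  proof (cases "odd j \<or> j mod 4 = 2")
    case True then show ?thesis using turn_eq[OF less.prems] by auto
  next
    case False
    then have "j div 4 < j" "j div 4 > 0" using less.prems by auto presburger+
    then show ?thesis using less.IH turn_eq[OF less.prems] False by auto
  qed
qed

lemma turn_shift: "0 < j \<Longrightarrow> j < 4^p \<Longrightarrow> turn (q * 4^p + j) = turn j"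
proof (induction p arbitrary: j)
  case 0 then show ?case by simp
next
  case (Suc p)
  have pos: "q * 4^Suc p + j > 0" using Suc.prems by simp
  have m: "(q * 4^Suc p + j) mod 4 = j mod 4" by (simp add: mod_add_left_eq[symmetric])
  have o: "odd (q * 4^Suc p + j) = odd j" by simp
  show ?case
  proof (cases "odd j \<or> j mod 4 = 2")
    case True then show ?thesis using turn_eq[OF pos] turn_eq[OF Suc.prems(1)] m o by auto
  next
    case False
    have d: "(q * 4^Suc p + j) div 4 = q * 4^p + j div 4" by simp
    have "j div 4 > 0" using False Suc.prems(1) by presburger
    moreover have "j div 4 < 4^p" using Suc.prems(2) by auto
    ultimately show ?thesis using turn_eq[OF pos] turn_eq[OF Suc.prems(1)] m o False d Suc.IH by auto
  qed
qed

lemma turn_pow: "turn (4^p) = 1"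
  by (induction p) (auto simp: turn_eq)

fun D :: "nat \<Rightarrow> int" where
  "D 0 = 0"
| "D (Suc e) = D e + turn (Suc e)"

lemma D_4a: "D (4*a) = D a"
proof (induction a)
  case 0 then show ?case by simp
next
  case (Suc a)
  have e: "4 * Suc a = Suc (Suc (Suc (Suc (4*a))))" by simp
  have "D (Suc (Suc (Suc (Suc (4*a))))) = D (4*a) + turn (Suc (4*a)) + turn (Suc (Suc (4*a)))
     + turn (Suc (Suc (Suc (4*a)))) + turn (Suc (Suc (Suc (Suc (4*a)))))"
    by (simp only: D.simps)
  also have "\<dots> = D a + turn (Suc a)" using Suc by (simp only: turn_4a1 turn_4a2 turn_4a3 turn_4a4)
  finally show ?case by (simp only: e D.simps)
qed

lemma D_4a1: "D (4*a+1) = D a + 1"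
proof -
  have "D (4*a+1) = D (4*a) + turn (Suc (4*a))" by simp
  then show ?thesis by (simp only: D_4a turn_4a1)
qed
lemma D_4a2: "D (4*a+2) = D a - 1"
proof -
  have "D (4*a+2) = D (4*a+1) + turn (Suc (Suc (4*a)))" by (simp add: numeral_eq_Suc)
  then show ?thesis by (simp only: D_4a1 turn_4a2)
qed
lemma D_4a3: "D (4*a+3) = D a"
proof -
  have "D (4*a+3) = D (4*a+2) + turn (Suc (Suc (Suc (4*a))))" by (simp add: numeral_eq_Suc)
  then show ?thesis by (simp only: D_4a2 turn_4a3)
qed


lemma len_koch_edge[simp]: "length (koch_edge p q) = 4" by (simp add: koch_edge_def)

lemma kr_len: "xs \<noteq> [] \<Longrightarrow> length (koch_refine xs) = 4 * (length xs - 1) + 1"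
  by (induction xs rule: koch_refine.induct) auto

lemma kr_nth: "Suc a < length xs \<Longrightarrow> b < 4 \<Longrightarrow> koch_refine xs ! (4*a+b) = koch_edge (xs!a) (xs!Suc a) ! b"
proof (induction xs arbitrary: a rule: koch_refine.induct)
  case (3 p q rest)
  show ?case
  proof (cases a)
    case 0 then show ?thesis using 3 by (simp add: nth_append)
  next
    case (Suc a')
    have "koch_refine (p # q # rest) ! (4*a+b) = koch_refine (q # rest) ! (4*a'+b)"
      using Suc by (simp add: nth_append)
    also have "\<dots> = koch_edge ((q#rest)!a') ((q#rest)!Suc a') ! b" using 3 Suc by simp
    finally show ?thesis using Suc by simp
  qed
qed auto

lemma kr_nth0: "a < length xs \<Longrightarrow> koch_refine xs ! (4*a) = xs ! a"
proof (induction xs arbitrary: a rule: koch_refine.induct)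
  case (3 p q rest)
  show ?case
  proof (cases a)
    case 0 then show ?thesis by (simp add: koch_edge_def)
  next
    case (Suc a')
    have "koch_refine (p # q # rest) ! (4*a) = koch_refine (q # rest) ! (4*a')"
      using Suc by (simp add: nth_append)
    also have "\<dots> = (q#rest) ! a'" using 3 Suc by simp
    finally show ?thesis using Suc by simp
  qed
qed auto

definition u :: "real \<Rightarrow> real^2" where "u t = vector [cos t, sin t]"

lemma u1[simp]: "u t $ 1 = cos t" and u2[simp]: "u t $ 2 = sin t" by (simp_all add: u_def)

lemma rot1[simp]: "rot t v $ 1 = cos t * v$1 - sin t * v$2"
  and rot2[simp]: "rot t v $ 2 = sin t * v$1 + cos t * v$2" by (simp_all add: rot_def)

lemma vec2_eq: "(x::real^2) = y \<longleftrightarrow> x$1 = y$1 \<and> x$2 = y$2"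
  by (simp add: vec_eq_iff forall_2)

lemma rot_su: "rot t (c *\<^sub>R u s) = c *\<^sub>R u (s + t)"
  by (simp add: vec2_eq cos_add sin_add algebra_simps)

lemma rot_scaleR: "rot t (c *\<^sub>R v) = c *\<^sub>R rot t v"
  by (simp add: vec2_eq algebra_simps)

lemma u_minus_rot: "u s - rot (pi/3) (u s) = u (s - pi/3)"
  by (simp add: vec2_eq cos_add sin_add cos_diff sin_diff cos_60 sin_60 algebra_simps)

lemma refine_step:
  assumes len: "length xs = 4^p + 1"
    and ed: "\<forall>i < 4^p. xs ! Suc i - xs ! i = c *\<^sub>R u (of_int (D i) * pi/3)"
  shows "length (koch_refine xs) = 4^Suc p + 1"
    "\<forall>i < 4^Suc p. koch_refine xs ! Suc i - koch_refine xs ! i = (c/3) *\<^sub>R u (of_int (D i) * pi/3)"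
proof -
  show "length (koch_refine xs) = 4^Suc p + 1" using len kr_len[of xs] by (cases "xs = []") auto
  show "\<forall>i < 4^Suc p. koch_refine xs ! Suc i - koch_refine xs ! i = (c/3) *\<^sub>R u (of_int (D i) * pi/3)"
  proof (intro allI impI)
    fix i :: nat assume i: "i < 4^Suc p"
    define a where "a = i div 4"
    define b where "b = i mod 4"
    have iab: "i = 4*a+b" by (simp add: a_def b_def)
    have a: "a < 4^p" using i by (simp add: a_def less_mult_imp_div_less)
    have sa: "Suc a < length xs" using a len by simp
    define P where "P = xs!a"
    define Q where "Q = xs!Suc a"
    define s where "s = of_int (D a) * pi / 3"
    have QP: "Q - P = c *\<^sub>R u s" using ed a by (simp add: P_def Q_def s_def)
    have Q: "Q = P + c *\<^sub>R u s" using QP by (simp add: algebra_simps)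
    have e: "\<And>b. b < 4 \<Longrightarrow> koch_refine xs ! (4*a+b) = koch_edge P Q ! b"
      using kr_nth[OF sa] by (simp add: P_def Q_def)
    have "b < 4" by (simp add: b_def)
    then consider "b = 0" | "b = 1" | "b = 2" | "b = 3" by linarith
    then show "koch_refine xs ! Suc i - koch_refine xs ! i = (c/3) *\<^sub>R u (of_int (D i) * pi/3)"
    proof cases
      case 1
      have "koch_refine xs ! Suc i = koch_edge P Q ! 1" using e[of 1] 1 iab by simp
      moreover have "koch_refine xs ! i = koch_edge P Q ! 0" using e[of 0] 1 iab by simp
      moreover have "D i = D a" using 1 iab D_4a by simp
      ultimately show ?thesis using Q by (simp add: koch_edge_def s_def algebra_simps)
    next
      case 2
      have "koch_refine xs ! Suc i = koch_edge P Q ! 2" using e[of 2] 2 iab by simp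
      moreover have "koch_refine xs ! i = koch_edge P Q ! 1" using e[of 1] 2 iab by simp
      moreover have "D i = D a + 1" using 2 iab D_4a1 by simp
      then have arg: "of_int (D i) * pi / 3 = s + pi/3" by (simp add: s_def field_simps)
      ultimately have "koch_refine xs ! Suc i - koch_refine xs ! i = (c/3) *\<^sub>R u (s + pi/3)"
        using Q by (simp add: koch_edge_def algebra_simps rot_su)
      then show ?thesis unfolding arg .
    next
      case 3
      have k1: "koch_refine xs ! Suc i = koch_edge P Q ! 3" using e[of 3] 3 iab by (simp add: numeral_eq_Suc)
      have k2: "koch_refine xs ! i = koch_edge P Q ! 2" using e[of 2] 3 iab by simp
      have "D i = D a - 1" using 3 iab D_4a2 by simp
      then have di: "real_of_int (D i) = real_of_int (D a) - 1" by simp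
      have arg: "of_int (D i) * pi / 3 = s - pi/3" unfolding di s_def by (simp add: field_simps)
      have gen: "\<And>v. (P + (2/3) *\<^sub>R v) - (P + (1/3) *\<^sub>R v + (1/3) *\<^sub>R rot (pi/3) v) = (1/3) *\<^sub>R v - (1/3) *\<^sub>R rot (pi/3) v"
        by (simp add: vec2_eq)
      have "koch_refine xs ! Suc i - koch_refine xs ! i = (1/3) *\<^sub>R (Q-P) - (1/3) *\<^sub>R rot (pi/3) (Q-P)"
        unfolding k1 k2 using gen[of "Q-P"] by (simp add: koch_edge_def)
      also have "\<dots> = (c/3) *\<^sub>R (u s - rot (pi/3) (u s))"
        unfolding QP by (simp add: rot_scaleR algebra_simps)
      also have "\<dots> = (c/3) *\<^sub>R u (s - pi/3)" using u_minus_rot[of s] by simp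
      finally show ?thesis unfolding arg .
    next
      case 4
      have "koch_refine xs ! Suc i = koch_refine xs ! (4 * Suc a)" using 4 iab by simp
      also have "\<dots> = Q" using kr_nth0[of "Suc a" xs] sa by (simp add: Q_def)
      finally have x: "koch_refine xs ! Suc i = Q" .
      moreover have "koch_refine xs ! i = koch_edge P Q ! 3" using e[of 3] 4 iab by simp
      moreover have "D i = D a" using 4 iab D_4a3 by simp
      ultimately show ?thesis using Q by (simp add: koch_edge_def s_def vec2_eq)
    qed
  qed
qed

lemma brk_u: "brk (c *\<^sub>R u a) (c *\<^sub>R u b) = c^2 * sin (b - a)"
proof -
  have "brk (c *\<^sub>R u a) (c *\<^sub>R u b) = c * cos a * (c * sin b) - c * sin a * (c * cos b)"
    by (simp add: brk_def)
  also have "\<dots> = (c::real)^2 * (sin b * cos a - cos b * sin a)"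
    by (simp add: power2_eq_square algebra_simps)
  finally show ?thesis by (simp add: sin_diff)
qed

definition K0 :: "(real^2) list" where "K0 = [vector [0, 0], vector [1, 0]]"

lemma koch_lvl: "length ((koch_refine ^^ p) K0) = 4^p + 1 \<and>
  (\<forall>i < 4^p. (koch_refine ^^ p) K0 ! Suc i - (koch_refine ^^ p) K0 ! i = ((1/3)^p) *\<^sub>R u (of_int (D i) * pi/3))"
proof (induction p)
  case 0
  show ?case by (simp add: K0_def u_def vec2_eq)
next
  case (Suc p)
  have e: "(koch_refine ^^ Suc p) K0 = koch_refine ((koch_refine ^^ p) K0)" by (simp only: funpow.simps o_apply)
  have r: "(1/3::real)^Suc p = (1/3)^p / 3" by simp
  show ?case unfolding e r using refine_step[of "(koch_refine ^^ p) K0" p "(1/3)^p"] Suc by blast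
qed
lemma koch_eq: "n \<ge> 1 \<Longrightarrow> koch n = (koch_refine ^^ (n-1)) K0"
  by (simp add: koch_def K0_def)

lemma tng_kv: assumes "n \<ge> 1" "1 \<le> i" "i \<le> 4^(n-1)"
  shows "tng (kv n) i = ((1/3)^(n-1)) *\<^sub>R u (of_int (D (i-1)) * pi/3)"
proof -
  have i: "i = Suc (i-1)" using assms(2) by simp
  have "tng (kv n) i = koch n ! Suc (i-1) - koch n ! (i-1)"
    unfolding tng_def kv_def by (subst i, simp)
  also have "\<dots> = ((1/3)^(n-1)) *\<^sub>R u (of_int (D (i-1)) * pi/3)"
  proof -
    have h: "i - 1 < 4^(n-1)" using assms(2,3) by simp
    show ?thesis unfolding koch_eq[OF assms(1)] using conjunct2[OF koch_lvl[of "n-1"]] h by blast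
  qed
  finally show ?thesis .
qed

lemma tng_r: "tng (\<lambda>i. A *v f i + b) i = A *v tng f i"
  by (simp add: tng_def matrix_vector_mult_diff_distrib)

lemma brk_A: "brk (A *v x) (A *v y) = det A * brk x y"
proof -
  have "brk (A *v x) (A *v y) = (A$1$1 * x$1 + A$1$2 * x$2) * (A$2$1 * y$1 + A$2$2 * y$2)
     - (A$2$1 * x$1 + A$2$2 * x$2) * (A$1$1 * y$1 + A$1$2 * y$2)"
    by (simp add: brk_def matrix_vector_mult_def sum_2)
  also have "\<dots> = (A$1$1 * A$2$2 - A$1$2 * A$2$1) * (x$1 * y$2 - x$2 * y$1)"
    by (simp add: algebra_simps)
  finally show ?thesis by (simp add: det_2 brk_def)
qed

definition S :: "int \<Rightarrow> real" where "S x = sin (of_int x * pi / 3)"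

lemma S_vals: "S 1 = sqrt 3 / 2" "S (-2) = - (sqrt 3 / 2)" "S 2 = sqrt 3 / 2" "S (-1) = - (sqrt 3 / 2)"
proof -
  have a: "2 * pi / 3 = pi - pi/3" by simp
  show "S 1 = sqrt 3 / 2" by (simp add: S_def sin_60)
  have "S 2 = sin (2 * pi / 3)" by (simp add: S_def)
  then show "S 2 = sqrt 3 / 2" by (simp only: a sin_pi_minus sin_60)
  have "S (-2) = sin (- (2 * pi / 3))" by (simp add: S_def)
  then show "S (-2) = - (sqrt 3 / 2)" by (simp only: sin_minus a sin_pi_minus sin_60)
  have "S (-1) = sin (- (pi / 3))" by (simp add: S_def)
  then show "S (-1) = - (sqrt 3 / 2)" by (simp only: sin_minus sin_60)
qed


lemma D_arg: assumes "1 \<le> j"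
  shows "of_int (D j) * pi/3 - of_int (D (j-1)) * pi/3 = of_int (turn j) * pi / 3"
proof -
  have j: "j = Suc (j-1)" using assms by simp
  have d: "D j = D (j-1) + turn j" by (subst j, subst D.simps, subst j[symmetric], rule refl)
  show ?thesis by (simp add: d algebra_simps diff_divide_distrib[symmetric])
qed

lemma brk_adj:
  assumes "n \<ge> 1" "1 \<le> j" "j + 1 \<le> 4^(n-1)"
  shows "brk (tng (\<lambda>i. A *v kv n i + b) j) (tng (\<lambda>i. A *v kv n i + b) (j+1))
        = det A * ((1/3)^(n-1))^2 * S (turn j)"
proof -
  have j: "j = Suc (j-1)" using assms(2) by simp
  have d: "D j = D (j-1) + turn j" by (subst j, subst D.simps, subst j[symmetric], rule refl)
  have "brk (tng (\<lambda>i. A *v kv n i + b) j) (tng (\<lambda>i. A *v kv n i + b) (j+1))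
     = det A * brk (tng (kv n) j) (tng (kv n) (j+1))" by (simp only: tng_r brk_A)
  also have "\<dots> = det A * (((1/3)^(n-1))^2 * sin (of_int (D j) * pi/3 - of_int (D (j-1)) * pi/3))"
    using tng_kv[OF assms(1) assms(2)] tng_kv[OF assms(1), of "j+1"] assms by (simp add: brk_u)
  also have "of_int (D j) * pi/3 - of_int (D (j-1)) * pi/3 = of_int (turn j) * pi / 3"
    by (simp add: d algebra_simps diff_divide_distrib[symmetric])
  finally show ?thesis by (simp add: S_def)
qed

lemma brk_skip:
  assumes "n \<ge> 1" "2 \<le> j" "j + 1 \<le> 4^(n-1)"
  shows "brk (tng (\<lambda>i. A *v kv n i + b) (j-1)) (tng (\<lambda>i. A *v kv n i + b) (j+1))
        = det A * ((1/3)^(n-1))^2 * S (turn (j-1) + turn j)"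
proof -
  have j: "j = Suc (j-1)" using assms(2) by simp
  have j1: "j - 1 = Suc (j-2)" using assms(2) by simp
  have d: "D j = D (j-1) + turn j" by (subst j, subst D.simps, subst j[symmetric], rule refl)
  have d1: "D (j-1) = D (j-2) + turn (j-1)" by (subst j1, subst D.simps, subst j1[symmetric], rule refl)
  have e: "j - 1 - 1 = j - 2" by simp
  have "brk (tng (\<lambda>i. A *v kv n i + b) (j-1)) (tng (\<lambda>i. A *v kv n i + b) (j+1))
     = det A * brk (tng (kv n) (j-1)) (tng (kv n) (j+1))" by (simp only: tng_r brk_A)
  also have "\<dots> = det A * (((1/3)^(n-1))^2 * sin (of_int (D j) * pi/3 - of_int (D (j-2)) * pi/3))"
    using tng_kv[OF assms(1), of "j-1"] tng_kv[OF assms(1), of "j+1"] assms by (simp add: brk_u e numeral_2_eq_2)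
  also have "of_int (D j) * pi/3 - of_int (D (j-2)) * pi/3 = of_int (turn (j-1) + turn j) * pi / 3"
  proof -
    have h1: "of_int (D j) * pi/3 - of_int (D (j-1)) * pi/3 = of_int (turn j) * pi / 3"
      using D_arg[of j] assms(2) by simp
    have h2: "of_int (D (j-1)) * pi/3 - of_int (D (j-2)) * pi/3 = of_int (turn (j-1)) * pi / 3"
      using D_arg[of "j-1"] assms(2) e by simp
    have h3: "of_int (turn (j-1) + turn j) * pi / 3 = of_int (turn (j-1)) * pi / 3 + of_int (turn j) * pi / 3"
      by (simp add: algebra_simps add_divide_distrib)
    show ?thesis using h1 h2 h3 by linarith
  qed
  finally show ?thesis by (simp add: S_def)
qed

lemma norm_u: "norm (u a) = 1"
  by (simp add: norm_eq_sqrt_inner inner_vec_def sum_2)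

lemma angle_u: assumes "c > 0"
  shows "vec_angle (- (c *\<^sub>R u a)) (c *\<^sub>R u b) = arccos (- cos (b - a))"
proof -
  have i: "(- (c *\<^sub>R u a)) \<bullet> (c *\<^sub>R u b) = - (c * c * cos (b - a))"
    by (simp add: inner_vec_def sum_2 cos_diff algebra_simps)
  have n: "norm (- (c *\<^sub>R u a)) = c" "norm (c *\<^sub>R u b) = c" using assms by (simp_all add: norm_u)
  show ?thesis unfolding vec_angle_def i n using assms by simp
qed

lemma sharp_iff:
  assumes "n \<ge> 1" "1 \<le> k" "2*k + 1 \<le> 4^(n-1)"
  shows "sharp n (2*k+1) \<longleftrightarrow> turn (2*k) = -2"
proof -
  define c :: real where "c = (1/3)^(n-1)"
  have c: "c > 0" by (simp add: c_def)
  have t1: "kv n (2*k) - kv n (2*k+1) = - tng (kv n) (2*k)" by (simp add: tng_def)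
  have t2: "kv n (2*k+1+1) - kv n (2*k+1) = tng (kv n) (2*k+1)" by (simp add: tng_def)
  have d: "D (2*k) = D (2*k-1) + turn (2*k)"
  proof -
    have j: "2*k = Suc (2*k-1)" using assms(2) by simp
    show ?thesis by (subst j, subst D.simps, subst j[symmetric], rule refl)
  qed
  have "vec_angle (kv n (2*k+1-1) - kv n (2*k+1)) (kv n (2*k+1+1) - kv n (2*k+1))
      = arccos (- cos (of_int (D (2*k)) * pi/3 - of_int (D (2*k-1)) * pi/3))"
    using tng_kv[OF assms(1), of "2*k"] tng_kv[OF assms(1), of "2*k+1"] assms t1 t2 angle_u[OF c]
    by (simp add: c_def)
  also have "of_int (D (2*k)) * pi/3 - of_int (D (2*k-1)) * pi/3 = of_int (turn (2*k)) * pi / 3"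
    using D_arg[of "2*k"] assms(2) by simp
  finally have va: "vec_angle (kv n (2*k+1-1) - kv n (2*k+1)) (kv n (2*k+1+1) - kv n (2*k+1))
     = arccos (- cos (of_int (turn (2*k)) * pi / 3))" .
  have tv: "turn (2*k) = 1 \<or> turn (2*k) = -2" using turn_vals assms(2) by simp
  have a: "2 * pi / 3 = pi - pi/3" by simp
  have cm2: "cos (of_int (-2) * pi / 3) = - (1/2)"
  proof -
    have "cos (of_int (-2) * pi / 3) = cos (- (2 * pi / 3))" by simp
    then show ?thesis by (simp only: cos_minus a cos_pi_minus cos_60)
  qed
  have ne: "2 * pi / 3 \<noteq> pi / 3" by simp
  show ?thesis
    unfolding sharp_def va using tv assms cm2 ne by (auto simp: cos_60)
qed


definition cf :: "nat \<Rightarrow> nat" where "cf k = (if turn (2*k) = -2 then 1 else 0)"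

lemma pow4: "m \<ge> 2 \<Longrightarrow> (4::nat)^(m-1) = 4 * 4^(m-2)"
proof -
  assume "m \<ge> 2"
  then have "m - 1 = Suc (m-2)" by simp
  then show ?thesis by simp
qed

lemma code_formula: "m \<ge> 2 \<Longrightarrow> koch_code m = map cf [1..<2*4^(m-2)]"
  unfolding koch_code_def
proof (rule map_cong[OF refl])
  fix k assume m: "m \<ge> 2" and k: "k \<in> set [1..<2*4^(m-2)]"
  have "2*k+1 \<le> 4^(m-1)" using k pow4[OF m] by simp
  then have "sharp m (2*k+1) \<longleftrightarrow> turn (2*k) = -2" using sharp_iff[of m k] m k by simp
  then show "(if sharp m (2 * k + 1) then 1 else 0) = cf k" by (simp add: cf_def)
qed

lemma turn_mul: "q > 0 \<Longrightarrow> turn (q * 4^p) = turn q"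
proof (induction p)
  case 0 then show ?case by simp
next
  case (Suc p)
  have pos: "q * 4^Suc p > 0" using Suc.prems by simp
  have "q * 4^Suc p = 4 * (q * 4^p)" by simp
  then have "\<not> odd (q * 4^Suc p)" "(q * 4^Suc p) mod 4 = 0" "(q * 4^Suc p) div 4 = q * 4^p" by simp_all
  then show ?case using turn_eq[OF pos] Suc by simp
qed

lemma map_plus_upt: "map (\<lambda>i. i + c) [a..<b] = [a+c..<b+c]"
  by (induction b) auto

lemma split3: "a \<le> b \<Longrightarrow> b < c \<Longrightarrow> [a..<c] = [a..<b] @ [b] @ [Suc b..<c]"
proof -
  assume ab: "a \<le> b" and bc: "b < c"
  have "[a..<c] = [a..<b] @ [b..<c]" using upt_add_eq_append[OF ab, of "c-b"] bc by simp
  then show ?thesis using upt_conv_Cons[OF bc] by simp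
qed

lemma shift_map:
  assumes "2 * M = 4^p"
  shows "map cf [q*M+1..<q*M+M] = map cf [1..<M]"
proof -
  have "[q*M+1..<q*M+M] = map (\<lambda>i. i + q*M) [1..<M]" using map_plus_upt[of "q*M" 1 M] by (simp add: add.commute)
  then have "map cf [q*M+1..<q*M+M] = map (\<lambda>i. cf (i + q*M)) [1..<M]" by simp
  also have "\<dots> = map cf [1..<M]"
  proof (rule map_cong[OF refl])
    fix i assume "i \<in> set [1..<M]"
    then have "0 < 2*i" "2*i < 4^p" using assms by auto
    then have "turn (q * 4^p + 2*i) = turn (2*i)" by (rule turn_shift)
    moreover have eq: "2 * (i + q*M) = q * 4^p + 2*i" using assms by (simp add: algebra_simps)
    ultimately show "cf (i + q*M) = cf i" unfolding cf_def eq by simp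
  qed
  finally show ?thesis .
qed

lemma code_rec: assumes m: "m \<ge> 2"
  shows "koch_code (m + 1) = koch_code m @ [0] @ koch_code m @ [1] @ koch_code m @ [0] @ koch_code m"
proof -
  define M :: nat where "M = 2 * 4^(m-2)"
  have M2: "2 * M = 4^(m-1)" using pow4[OF m] by (simp add: M_def)
  have M1: "1 \<le> M" by (simp add: M_def)
  have c1: "koch_code (m+1) = map cf [1..<4*M]"
    using code_formula[of "m+1"] m pow4[OF m] by (simp add: M_def)
  have c0: "koch_code m = map cf [1..<M]" using code_formula[OF m] by (simp add: M_def)
  have sp: "[1..<4*M] = [1..<M] @ [M] @ [M+1..<2*M] @ [2*M] @ [2*M+1..<3*M] @ [3*M] @ [3*M+1..<4*M]"
  proof -
    have "[1..<4*M] = [1..<M] @ [M] @ [Suc M..<4*M]" using split3[of 1 M "4*M"] M1 by simp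
    moreover have "[Suc M..<4*M] = [Suc M..<2*M] @ [2*M] @ [Suc (2*M)..<4*M]" using split3 M1 by simp
    moreover have "[Suc (2*M)..<4*M] = [Suc (2*M)..<3*M] @ [3*M] @ [Suc (3*M)..<4*M]" using split3 M1 by simp
    ultimately show ?thesis by simp
  qed
  have s1: "map cf [M+1..<2*M] = map cf [1..<M]" using shift_map[OF M2, of 1] by (simp add: mult_2)
  have s2: "map cf [2*M+1..<3*M] = map cf [1..<M]" using shift_map[OF M2, of 2] by (simp add: algebra_simps)
  have s3: "map cf [3*M+1..<4*M] = map cf [1..<M]" using shift_map[OF M2, of 3] by (simp add: algebra_simps)
  have f1: "cf M = 0" using turn_mul[of 1 "m-1"] turn_pow M2 by (simp add: cf_def)
  have f2: "cf (2*M) = 1"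
  proof -
    have "turn (2*(2*M)) = turn 2" using turn_mul[of 2 "m-1"] M2 by simp
    then show ?thesis by (simp add: cf_def turn_eq)
  qed
  have f3: "cf (3*M) = 0"
  proof -
    have e: "2*(3*M) = 3 * 4^(m-1)" using M2 by simp
    have "turn (2*(3*M)) = turn 3" unfolding e using turn_mul[of 3 "m-1"] by simp
    then show ?thesis by (simp add: cf_def turn_eq)
  qed
  show ?thesis unfolding c1 c0 sp using s1 s2 s3 f1 f2 f3 by simp
qed


lemma curv:
  fixes n :: nat and A :: "real^2^2" and b :: "real^2"
  assumes n: "n \<ge> 2" and A: "invertible A"
    and k1: "1 \<le> k" and k2: "k \<le> 2 * 4^(n-2) - 1"
  defines "r \<equiv> (\<lambda>i. A *v kv n i + b)"
  defines "T \<equiv> turn (2*k)"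
  shows "brk (tng r (2*k - 1)) (tng r (2*k)) \<noteq> 0 \<and> brk (tng r (2*k)) (tng r (2*k + 1)) \<noteq> 0 \<and>
     kappa r (2*k) = S T / S 1 \<and> kappa r (2*k+1) = S 1 / S T \<and>
     kappa_bar r (2*k) = S (1 + T) / S 1 \<and> kappa_bar r (2*k+1) = S (T + 1) / S T"
proof -
  define Kc where "Kc = det A * ((1/3::real)^(n-1))^2"
  have Kc: "Kc \<noteq> 0" using A by (simp add: Kc_def invertible_det_nz)
  have n1: "n \<ge> 1" using n by simp
  have bnd: "2*k + 2 \<le> 4^(n-1)" using k1 k2 pow4[OF n] by simp
  have T: "T = 1 \<or> T = -2" using turn_vals[of "2*k"] k1 by (simp add: T_def)
  have S1: "S 1 \<noteq> 0" unfolding S_vals(1) by simp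
  have S2: "S (-2) \<noteq> 0" unfolding S_vals(2) by simp
  have ST: "S T \<noteq> 0" using T S1 S2 by auto
  have o1: "turn (2*k-1) = 1" using k1 by (intro turn_odd) presburger
  have o2: "turn (2*k+1) = 1" by (intro turn_odd) simp
  have e1: "2*k - 1 + 1 = 2*k" using k1 by simp
  have b1: "brk (tng r (2*k-1)) (tng r (2*k)) = Kc * S 1"
    using brk_adj[OF n1, of "2*k-1" A b] bnd k1 o1 unfolding r_def Kc_def e1 by simp
  have b2: "brk (tng r (2*k)) (tng r (2*k+1)) = Kc * S T"
    using brk_adj[OF n1, of "2*k" A b] bnd k1 unfolding r_def Kc_def T_def by simp
  have b3: "brk (tng r (2*k+1)) (tng r (2*k+1+1)) = Kc * S 1"
    using brk_adj[OF n1, of "2*k+1" A b] bnd k1 o2 unfolding r_def Kc_def by simp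
  have b4: "brk (tng r (2*k-1)) (tng r (2*k+1)) = Kc * S (1 + T)"
    using brk_skip[OF n1, of "2*k" A b] bnd k1 o1 unfolding r_def Kc_def T_def by simp
  have b5: "brk (tng r (2*k+1-1)) (tng r (2*k+1+1)) = Kc * S (T + 1)"
    using brk_skip[OF n1, of "2*k+1" A b] bnd k1 o2 unfolding r_def Kc_def T_def by simp
  have e2: "2*k+1-1 = 2*k" by simp
  show ?thesis
    unfolding kappa_def kappa_bar_def
    using b1 b2 b3 b4 b5 Kc ST S1 by (simp add: e2)
qed

theorem mainTheorem2:
  fixes n :: nat and A :: "real^2^2" and b :: "real^2"
  assumes "n \<ge> 2" and "invertible A"
  defines "r \<equiv> (\<lambda>i. A *v kv n i + b)"
  shows
    "(\<forall>k. 1 \<le> k \<and> k \<le> 2 * 4^(n-2) - 1 \<and> koch_code n ! (k - 1) = 1 \<longrightarrow>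
        brk (tng r (2*k - 1)) (tng r (2*k)) \<noteq> 0 \<and> brk (tng r (2*k)) (tng r (2*k + 1)) \<noteq> 0 \<and>
        kappa r (2*k) = -1 \<and> kappa r (2*k + 1) = -1 \<and>
        kappa_bar r (2*k) = -1 \<and> kappa_bar r (2*k + 1) = 1)
   \<and> (\<forall>k. 1 \<le> k \<and> k \<le> 2 * 4^(n-2) - 1 \<and> koch_code n ! (k - 1) = 0 \<longrightarrow>
        brk (tng r (2*k - 1)) (tng r (2*k)) \<noteq> 0 \<and> brk (tng r (2*k)) (tng r (2*k + 1)) \<noteq> 0 \<and>
        kappa r (2*k) = 1 \<and> kappa r (2*k + 1) = 1 \<and>
        kappa_bar r (2*k) = 1 \<and> kappa_bar r (2*k + 1) = 1)
   \<and> koch_code 2 = [1]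
   \<and> (\<forall>m\<ge>2. koch_code (m + 1) =
        koch_code m @ [0] @ koch_code m @ [1] @ koch_code m @ [0] @ koch_code m)
   \<and> koch_code 3 = [1,0,1,1,1,0,1]
   \<and> koch_code 4 = [1,0,1,1,1,0,1] @ [0] @ [1,0,1,1,1,0,1] @ [1] @ [1,0,1,1,1,0,1] @ [0] @ [1,0,1,1,1,0,1]
   \<and> (\<forall>m\<ge>2. length (koch_code m) = 2 * 4^(m-2) - 1)"
proof -
  have cnth: "\<And>k. 1 \<le> k \<Longrightarrow> k \<le> 2 * 4^(n-2) - 1 \<Longrightarrow> koch_code n ! (k - 1) = cf k"
  proof -
    fix k :: nat assume "1 \<le> k" "k \<le> 2 * 4^(n-2) - 1"
    then have "k - 1 < 2 * 4^(n-2) - 1" "1 + (k - 1) = k" by simp_all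
    then show "koch_code n ! (k - 1) = cf k" unfolding code_formula[OF assms(1)] by simp
  qed
  have sq: "sqrt 3 \<noteq> 0" by simp
  have P1: "\<forall>k. 1 \<le> k \<and> k \<le> 2 * 4^(n-2) - 1 \<and> koch_code n ! (k - 1) = 1 \<longrightarrow>
        brk (tng r (2*k - 1)) (tng r (2*k)) \<noteq> 0 \<and> brk (tng r (2*k)) (tng r (2*k + 1)) \<noteq> 0 \<and>
        kappa r (2*k) = -1 \<and> kappa r (2*k + 1) = -1 \<and>
        kappa_bar r (2*k) = -1 \<and> kappa_bar r (2*k + 1) = 1"
  proof (intro allI impI)
    fix k assume h: "1 \<le> k \<and> k \<le> 2 * 4^(n-2) - 1 \<and> koch_code n ! (k - 1) = 1"
    then have "cf k = 1" using cnth[of k] by simp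
    then have T: "turn (2*k) = -2" by (simp add: cf_def split: if_splits)
    have e: "turn (2*k) + 1 = -1" "1 + turn (2*k) = -1" using T by simp_all
    show "brk (tng r (2*k - 1)) (tng r (2*k)) \<noteq> 0 \<and> brk (tng r (2*k)) (tng r (2*k + 1)) \<noteq> 0 \<and>
        kappa r (2*k) = -1 \<and> kappa r (2*k + 1) = -1 \<and>
        kappa_bar r (2*k) = -1 \<and> kappa_bar r (2*k + 1) = 1"
      using curv[OF assms(1,2), of k b] h unfolding r_def e T using sq by (simp add: S_vals)
  qed
  have P0: "\<forall>k. 1 \<le> k \<and> k \<le> 2 * 4^(n-2) - 1 \<and> koch_code n ! (k - 1) = 0 \<longrightarrow>
        brk (tng r (2*k - 1)) (tng r (2*k)) \<noteq> 0 \<and> brk (tng r (2*k)) (tng r (2*k + 1)) \<noteq> 0 \<and>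
        kappa r (2*k) = 1 \<and> kappa r (2*k + 1) = 1 \<and>
        kappa_bar r (2*k) = 1 \<and> kappa_bar r (2*k + 1) = 1"
  proof (intro allI impI)
    fix k assume h: "1 \<le> k \<and> k \<le> 2 * 4^(n-2) - 1 \<and> koch_code n ! (k - 1) = 0"
    then have "cf k = 0" using cnth[of k] by simp
    then have "turn (2*k) \<noteq> -2" by (simp add: cf_def split: if_splits)
    then have T: "turn (2*k) = 1" using turn_vals[of "2*k"] h by auto
    have e: "turn (2*k) + 1 = 2" "1 + turn (2*k) = 2" using T by simp_all
    show "brk (tng r (2*k - 1)) (tng r (2*k)) \<noteq> 0 \<and> brk (tng r (2*k)) (tng r (2*k + 1)) \<noteq> 0 \<and>
        kappa r (2*k) = 1 \<and> kappa r (2*k + 1) = 1 \<and>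
        kappa_bar r (2*k) = 1 \<and> kappa_bar r (2*k + 1) = 1"
      using curv[OF assms(1,2), of k b] h unfolding r_def e T using sq by (simp add: S_vals)
  qed
  have c2: "koch_code 2 = [1]"
  proof -
    have "turn 2 = -2" by (simp add: turn_eq)
    moreover have "[1..<2] = [1::nat]" by (simp add: upt_rec)
    ultimately show ?thesis using code_formula[of 2] by (simp add: cf_def)
  qed
  have rec: "\<forall>m\<ge>2. koch_code (m + 1) =
        koch_code m @ [0] @ koch_code m @ [1] @ koch_code m @ [0] @ koch_code m"
    using code_rec by blast
  have c3: "koch_code 3 = [1,0,1,1,1,0,1]" using code_rec[of 2] c2 by simp
  have c4: "koch_code 4 = [1,0,1,1,1,0,1] @ [0] @ [1,0,1,1,1,0,1] @ [1] @ [1,0,1,1,1,0,1] @ [0] @ [1,0,1,1,1,0,1]"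
    using code_rec[of 3] c3 by simp
  have len: "\<forall>m\<ge>2. length (koch_code m) = 2 * 4^(m-2) - 1"
    using code_formula by simp
  show ?thesis using P1 P0 c2 rec c3 c4 len by blast
qed


end
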